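(* For every integer $n\ge 3$, the disjunctive domination number of the torus grid graph $C_3\Box C_n$ is $$\gamma_2^d(C_3\Box C_n)=\left\lceil \frac{n}{2}\right\rceil.$$
   Context: $C_k$ denotes the cycle on $k$ vertices, and $G\Box H$ is the Cartesian product: vertex set $V(G)\times V(H)$, with $(g,h)\sim(g',h')$ iff either $g=g'$ and $hh'\in E(H)$, or $h=h'$ and $gg'\in E(G)$. For a simple graph $\Gamma$ and a vertex $v$, let $\Gamma(v)$ be the set of vertices at distance $1$ from $v$ and $\Gamma_2(v)$ the set of vertices at distance exactly $2$ from $v$. A set $S\subseteq V(\Gamma)$ is a disjunctive dominating set if every vertex $v\notin S$ satisfies $|\Gamma(v)\cap S|\ge 1$ or $|\Gamma_2(v)\cap S|\ge 2$. The disjunctive domination number $\gamma_2^d(\Gamma)$ is the minimum cardinality of a disjunctive dominating set of $\Gamma$. *)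

theory Defs
  imports Main
begin

(* A simple graph is given by a finite vertex set V and a symmetric irreflexive
   adjacency relation E on V. *)

inductive walk :: "'a set \<Rightarrow> ('a \<Rightarrow> 'a \<Rightarrow> bool) \<Rightarrow> 'a \<Rightarrow> 'a \<Rightarrow> nat \<Rightarrow> bool"
  for V E where
  walk0: "u \<in> V \<Longrightarrow> walk V E u u 0"
| walkS: "u \<in> V \<Longrightarrow> E u w \<Longrightarrow> walk V E w v n \<Longrightarrow> walk V E u v (Suc n)"

definition at_dist :: "'a set \<Rightarrow> ('a \<Rightarrow> 'a \<Rightarrow> bool) \<Rightarrow> 'a \<Rightarrow> 'a \<Rightarrow> nat \<Rightarrow> bool" where
  "at_dist V E u v d \<longleftrightarrow> walk V E u v d \<and> (\<forall>m<d. \<not> walk V E u v m)"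

definition nbhd :: "'a set \<Rightarrow> ('a \<Rightarrow> 'a \<Rightarrow> bool) \<Rightarrow> 'a \<Rightarrow> 'a set" where
  "nbhd V E v = {u \<in> V. at_dist V E v u 1}"

definition nbhd2 :: "'a set \<Rightarrow> ('a \<Rightarrow> 'a \<Rightarrow> bool) \<Rightarrow> 'a \<Rightarrow> 'a set" where
  "nbhd2 V E v = {u \<in> V. at_dist V E v u 2}"

definition disj_dom_set :: "'a set \<Rightarrow> ('a \<Rightarrow> 'a \<Rightarrow> bool) \<Rightarrow> 'a set \<Rightarrow> bool" where
  "disj_dom_set V E S \<longleftrightarrow> S \<subseteq> V \<and>
     (\<forall>v \<in> V - S. card (nbhd V E v \<inter> S) \<ge> 1 \<or> card (nbhd2 V E v \<inter> S) \<ge> 2)"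

definition disj_dom_num :: "'a set \<Rightarrow> ('a \<Rightarrow> 'a \<Rightarrow> bool) \<Rightarrow> nat" where
  "disj_dom_num V E = (LEAST k. \<exists>S. disj_dom_set V E S \<and> card S = k)"

definition cycle_V :: "nat \<Rightarrow> nat set" where
  "cycle_V k = {0..<k}"

definition cycle_E :: "nat \<Rightarrow> nat \<Rightarrow> nat \<Rightarrow> bool" where
  "cycle_E k i j \<longleftrightarrow> i < k \<and> j < k \<and> i \<noteq> j \<and> (j = (i + 1) mod k \<or> i = (j + 1) mod k)"

definition cart_V :: "'a set \<Rightarrow> 'b set \<Rightarrow> ('a \<times> 'b) set" where
  "cart_V VG VH = VG \<times> VH"

definition cart_E :: "('a \<Rightarrow> 'a \<Rightarrow> bool) \<Rightarrow> ('b \<Rightarrow> 'b \<Rightarrow> bool) \<Rightarrow> ('a \<times> 'b) \<Rightarrow> ('a \<times> 'b) \<Rightarrow> bool" where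
  "cart_E EG EH p q \<longleftrightarrow>
     (fst p = fst q \<and> EH (snd p) (snd q)) \<or> (snd p = snd q \<and> EG (fst p) (fst q))"

end

theory Submission imports Defs begin

abbreviation "VV n \<equiv> cart_V (cycle_V 3) (cycle_V n)"
abbreviation "EE n \<equiv> cart_E (cycle_E 3) (cycle_E n)"

lemma walk0_iff: "walk V E u v 0 \<longleftrightarrow> u \<in> V \<and> u = v"
  by (auto elim: walk.cases intro: walk.intros)

lemma walkS_iff: "walk V E u v (Suc m) \<longleftrightarrow> u \<in> V \<and> (\<exists>w. E u w \<and> walk V E w v m)"
  by (auto elim: walk.cases intro: walk.intros)

lemma walk1_iff: "walk V E u v (Suc 0) \<longleftrightarrow> u \<in> V \<and> E u v \<and> v \<in> V"
  by (auto simp: walkS_iff walk0_iff)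

lemma walk2_iff: "walk V E u v 2 \<longleftrightarrow> u \<in> V \<and> (\<exists>w. w \<in> V \<and> E u w \<and> E w v) \<and> v \<in> V"
  by (auto simp: numeral_2_eq_2 walkS_iff walk0_iff)

lemma nbhd_E: "u \<in> nbhd V E v \<Longrightarrow> E v u"
  by (auto simp: nbhd_def at_dist_def walk1_iff)

lemma nbhd2_E: "u \<in> nbhd2 V E v \<Longrightarrow> \<exists>w. E v w \<and> E w u"
  by (auto simp: nbhd2_def at_dist_def walk2_iff)

lemma in_nbhd: "v \<in> V \<Longrightarrow> u \<in> V \<Longrightarrow> E v u \<Longrightarrow> u \<noteq> v \<Longrightarrow> u \<in> nbhd V E v"
  by (auto simp: nbhd_def at_dist_def walk1_iff walk0_iff)

lemma in_nbhd2: "v \<in> V \<Longrightarrow> u \<in> V \<Longrightarrow> w \<in> V \<Longrightarrow> E v w \<Longrightarrow> E w u \<Longrightarrow> u \<noteq> v \<Longrightarrow> \<not> E v u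
   \<Longrightarrow> u \<in> nbhd2 V E v"
  unfolding nbhd2_def at_dist_def walk2_iff
  by (auto simp: less_Suc_eq numeral_2_eq_2 walk1_iff walk0_iff)

lemma VV_iff: "(x, j) \<in> VV n \<longleftrightarrow> x < 3 \<and> j < n"
  by (simp add: cart_V_def cycle_V_def)

lemma EE_iff: "EE n (x, j) (y, k) \<longleftrightarrow> (x = y \<and> cycle_E n j k) \<or> (j = k \<and> cycle_E 3 x y)"
  by (simp add: cart_E_def)

lemma mod_suc_cancel:
  assumes "(a + 1) mod n = (b + 1) mod (n::nat)" shows "a mod n = b mod n"
proof (cases "n = 0")
  case True then show ?thesis using assms by simp
next
  case False
  have h: "((c + 1) mod n + (n - 1)) mod n = c mod n" for c
  proof -
    have "((c + 1) mod n + (n - 1)) mod n = (c + 1 + (n - 1)) mod n"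
      by (rule mod_add_left_eq)
    also have "c + 1 + (n - 1) = c + n" using False by simp
    finally show ?thesis by simp
  qed
  show ?thesis using h[of a] h[of b] assms by simp
qed

lemma adj:
  assumes "k < n" "cycle_E n ((m + 1) mod n) k \<or> cycle_E n k ((m + 1) mod n)"
  shows "k = (m + 2) mod n \<or> k = m mod n"
proof -
  from assms have "k = ((m + 1) mod n + 1) mod n \<or> (m + 1) mod n = (k + 1) mod n"
    unfolding cycle_E_def by auto
  then show ?thesis
  proof
    assume "k = ((m + 1) mod n + 1) mod n"
    then show ?thesis by (simp add: mod_Suc_eq)
  next
    assume "(m + 1) mod n = (k + 1) mod n"
    then have "k mod n = m mod n" using mod_suc_cancel by metis
    then show ?thesis using assms(1) by simp
  qed
qed


definition col :: "(nat \<times> nat) set \<Rightarrow> nat \<Rightarrow> nat \<Rightarrow> nat set" where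
  "col S n k = {x. (x, k mod n) \<in> S}"

lemma finite_VV: "finite (VV n)"
  by (simp add: cart_V_def cycle_V_def)

lemma adjE:
  assumes "k < n" "cycle_E n ((m + 1) mod n) k \<or> cycle_E n k ((m + 1) mod n)"
  obtains "k = (m + 2) mod n" | "k = m mod n"
  using adj[OF assms] by blast

lemma adj':
  assumes "k < n" "p = m + 1" "q = m + 2" "cycle_E n (p mod n) k \<or> cycle_E n k (p mod n)"
  shows "k = q mod n \<or> k = m mod n"
  using adj[of k n m] assms by blast

lemma key:
  assumes n: "n \<ge> 3" and dd: "disj_dom_set (VV n) (EE n) S" and x: "x < 3"
    and e2: "col S n (j + 2) = {}" and n1: "(x, (j + 1) mod n) \<notin> S" and n3: "(x, (j + 3) mod n) \<notin> S"
  shows "2 \<le> card (S \<inter> (UNIV \<times> {(j + 1) mod n, (j + 3) mod n})) + card (S \<inter> {(x, j mod n)})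
              + card (S \<inter> {(x, (j + 4) mod n)})"
proof -
  define c0 where "c0 = j mod n"
  define c1 where "c1 = (j + 1) mod n"
  define c2 where "c2 = (j + 2) mod n"
  define c3 where "c3 = (j + 3) mod n"
  define c4 where "c4 = (j + 4) mod n"
  have a1: "k < n \<Longrightarrow> cycle_E n c1 k \<or> cycle_E n k c1 \<Longrightarrow> k = c2 \<or> k = c0" for k
    unfolding c0_def c1_def c2_def by (rule adj'[of k n "j+1" j "j+2"]) simp_all
  have a2: "k < n \<Longrightarrow> cycle_E n c2 k \<or> cycle_E n k c2 \<Longrightarrow> k = c3 \<or> k = c1" for k
    unfolding c3_def c1_def c2_def by (rule adj'[of k n "j+2" "j+1" "j+3"]) simp_all
  have a3: "k < n \<Longrightarrow> cycle_E n c3 k \<or> cycle_E n k c3 \<Longrightarrow> k = c4 \<or> k = c2" for k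
    unfolding c3_def c4_def c2_def by (rule adj'[of k n "j+3" "j+2" "j+4"]) simp_all
  have cE: "cycle_E m a b \<Longrightarrow> a < m \<and> b < m" for m a b by (simp add: cycle_E_def)
  define v where "v = (x, c2)"
  have SV: "S \<subseteq> VV n" using dd by (simp add: disj_dom_set_def)
  have finS: "finite S" using SV finite_VV finite_subset by blast
  have e2': "(y, c2) \<notin> S" for y using e2 by (auto simp: col_def c2_def)
  have vV: "v \<in> VV n" using x n by (simp add: v_def VV_iff c2_def)
  have vS: "v \<notin> S" using e2' by (simp add: v_def)
  have A: "nbhd (VV n) (EE n) v \<inter> S = {}"
  proof (rule ccontr)
    assume "nbhd (VV n) (EE n) v \<inter> S \<noteq> {}"
    then obtain y k where u: "(y, k) \<in> nbhd (VV n) (EE n) v" "(y, k) \<in> S" by auto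
    have kn: "k < n" using u(2) SV by (auto simp: VV_iff)
    have "EE n v (y, k)" using nbhd_E[OF u(1)] .
    then have "(x = y \<and> cycle_E n c2 k) \<or> (k = c2)"
      by (auto simp: v_def EE_iff)
    then show False using a2[OF kn] u e2' n1 n3 unfolding c1_def c3_def by blast
  qed
  have B: "nbhd2 (VV n) (EE n) v \<inter> S \<subseteq> (S \<inter> (UNIV \<times> {c1, c3})) \<union> (S \<inter> {(x, c0)}) \<union> (S \<inter> {(x, c4)})"
  proof
    fix u assume u: "u \<in> nbhd2 (VV n) (EE n) v \<inter> S"
    obtain y k where uyk: "u = (y, k)" by (cases u)
    have "\<exists>w. EE n v w \<and> EE n w (y, k)" using nbhd2_E[of "(y, k)"] u uyk by blast
    then obtain z l where w: "EE n v (z, l)" "EE n (z, l) (y, k)" by auto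
    have kn: "k < n" using u uyk SV by (auto simp: VV_iff)
    have ln: "l < n" using w(1) cE n by (auto simp: v_def EE_iff c2_def)
    have w1: "(z = x \<and> (l = c3 \<or> l = c1)) \<or> l = c2"
      using w(1) a2[OF ln] by (auto simp: v_def EE_iff)
    have w2: "(y = z \<and> cycle_E n l k) \<or> k = l" using w(2) by (auto simp: EE_iff)
    have uS: "(y, k) \<in> S" using u uyk by auto
    from w1 w2 show "u \<in> (S \<inter> (UNIV \<times> {c1, c3})) \<union> (S \<inter> {(x, c0)}) \<union> (S \<inter> {(x, c4)})"
      using a1[OF kn] a2[OF kn] a3[OF kn] uS e2' uyk by blast
  qed
  have "card (nbhd (VV n) (EE n) v \<inter> S) \<ge> 1 \<or> card (nbhd2 (VV n) (EE n) v \<inter> S) \<ge> 2"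
    using dd vV vS unfolding disj_dom_set_def by blast
  then have "card (nbhd2 (VV n) (EE n) v \<inter> S) \<ge> 2" using A by simp
  also have "card (nbhd2 (VV n) (EE n) v \<inter> S) \<le> card ((S \<inter> (UNIV \<times> {c1, c3})) \<union> (S \<inter> {(x, c0)}) \<union> (S \<inter> {(x, c4)}))"
    using B finS by (intro card_mono) auto
  also have "\<dots> \<le> card (S \<inter> (UNIV \<times> {c1, c3})) + card (S \<inter> {(x, c0)}) + card (S \<inter> {(x, c4)})"
    by (meson card_Un_le add_right_mono le_trans)
  finally show ?thesis unfolding c0_def c1_def c3_def c4_def .
qed


definition psi :: "nat \<Rightarrow> nat \<Rightarrow> nat \<Rightarrow> nat \<Rightarrow> nat" where
 "psi a b c d = (if a = 0 \<and> b = 0 then (if c = 0 then (if d \<ge> 2 then 2 else 0) else if c = 1 then 2 else 3)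
   else if a = 0 \<and> b = 1 then 1
   else if a = 1 \<and> b = 0 then (if c = 0 then (if d \<ge> 2 then 2 else 1) else 2)
   else if a \<ge> 2 \<and> b = 0 then 1 else 0)"

lemma psi_step:
  assumes "a \<le> 3" "b \<le> 3" "c \<le> 3" "d \<le> 3" "e \<le> 3"
    and R0: "c = 0 \<Longrightarrow> b = 0 \<Longrightarrow> d = 0 \<Longrightarrow> a = 3 \<and> e = 3"
    and R1: "c = 0 \<Longrightarrow> b + d = 1 \<Longrightarrow> a + e \<ge> 2"
  shows "psi a b c d + 1 \<le> 2 * c + psi b c d e"
proof -
  have r: "x \<le> 3 \<Longrightarrow> x = 0 \<or> x = 1 \<or> x = 2 \<or> x = 3" for x :: nat by auto
  show ?thesis using r[OF assms(1)] r[OF assms(2)] r[OF assms(3)] r[OF assms(4)] r[OF assms(5)] R0 R1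
    unfolding psi_def by (elim disjE) simp_all
qed

lemma shift_sum:
  fixes f :: "nat \<Rightarrow> nat"
  assumes "f n = f 0"
  shows "(\<Sum>j<n. f (Suc j)) = (\<Sum>j<n. f j)"
proof -
  have "(\<Sum>j<Suc n. f j) = f 0 + (\<Sum>j<n. f (Suc j))" by (rule sum.lessThan_Suc_shift)
  moreover have "(\<Sum>j<Suc n. f j) = (\<Sum>j<n. f j) + f n" by simp
  ultimately show ?thesis using assms by simp
qed

context
  fixes n :: nat and S :: "(nat \<times> nat) set"
  assumes n: "n \<ge> 3" and dd: "disj_dom_set (VV n) (EE n) S"
begin

lemma SV: "S \<subseteq> VV n" using dd by (simp add: disj_dom_set_def)

lemma col_sub: "col S n k \<subseteq> {0, 1, 2}"
  using SV by (auto simp: col_def VV_iff)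

lemma col_fin: "finite (col S n k)"
  using col_sub finite_subset by blast

lemma col_le: "card (col S n k) \<le> 3"
proof -
  have "card (col S n k) \<le> card {0::nat, 1, 2}" using col_sub by (intro card_mono) auto
  then show ?thesis by simp
qed

lemma card_U: "card (S \<inter> (UNIV \<times> {(j + 1) mod n, (j + 3) mod n})) \<le> card (col S n (j + 1)) + card (col S n (j + 3))"
proof -
  have "S \<inter> (UNIV \<times> {(j + 1) mod n, (j + 3) mod n}) \<subseteq> (\<lambda>y. (y, (j + 1) mod n)) ` col S n (j + 1) \<union> (\<lambda>y. (y, (j + 3) mod n)) ` col S n (j + 3)"
    by (auto simp: col_def)
  then have "card (S \<inter> (UNIV \<times> {(j + 1) mod n, (j + 3) mod n})) \<le> card ((\<lambda>y. (y, (j + 1) mod n)) ` col S n (j + 1) \<union> (\<lambda>y. (y, (j + 3) mod n)) ` col S n (j + 3))"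
    using col_fin by (intro card_mono) auto
  also have "\<dots> \<le> card ((\<lambda>y. (y, (j + 1) mod n)) ` col S n (j + 1)) + card ((\<lambda>y. (y, (j + 3) mod n)) ` col S n (j + 3))"
    by (rule card_Un_le)
  also have "\<dots> \<le> card (col S n (j + 1)) + card (col S n (j + 3))"
    by (intro add_mono card_image_le col_fin)
  finally show ?thesis .
qed

lemma card_single: "card (S \<inter> {(x, k mod n)}) = (if x \<in> col S n k then 1 else 0)"
  by (auto simp: col_def)

lemma key2:
  assumes "x < 3" "col S n (j + 2) = {}" "x \<notin> col S n (j + 1)" "x \<notin> col S n (j + 3)"
  shows "2 \<le> card (col S n (j + 1)) + card (col S n (j + 3)) + (if x \<in> col S n j then 1 else 0)
              + (if x \<in> col S n (j + 4) then 1 else 0)"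
proof -
  have "2 \<le> card (S \<inter> (UNIV \<times> {(j + 1) mod n, (j + 3) mod n})) + card (S \<inter> {(x, j mod n)})
              + card (S \<inter> {(x, (j + 4) mod n)})"
    using key[OF n dd assms(1,2)] assms(3,4) by (simp add: col_def)
  then show ?thesis using card_U[of j] card_single[of x j] card_single[of x "j + 4"] by linarith
qed

lemma R0:
  assumes "card (col S n (j + 2)) = 0" "card (col S n (j + 1)) = 0" "card (col S n (j + 3)) = 0"
  shows "card (col S n j) = 3 \<and> card (col S n (j + 4)) = 3"
proof -
  have e: "col S n (j + 2) = {}" "col S n (j + 1) = {}" "col S n (j + 3) = {}"
    using assms col_fin by auto
  have "x \<in> col S n j \<and> x \<in> col S n (j + 4)" if "x < 3" for x
    using key2[OF that e(1)] e by (auto split: if_splits)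
  then have "col S n j = {0, 1, 2}" "col S n (j + 4) = {0, 1, 2}" using col_sub by force+
  then show ?thesis by simp
qed

lemma R1:
  assumes "card (col S n (j + 2)) = 0" "card (col S n (j + 1)) + card (col S n (j + 3)) = 1"
  shows "card (col S n j) + card (col S n (j + 4)) \<ge> 2"
proof -
  have e: "col S n (j + 2) = {}" using assms col_fin by auto
  have "card (col S n (j + 1) \<union> col S n (j + 3)) \<le> 1"
    using assms(2) card_Un_le[of "col S n (j + 1)" "col S n (j + 3)"] by linarith
  then obtain r where r: "col S n (j + 1) \<union> col S n (j + 3) \<subseteq> {r}"
    using col_fin card_le_Suc0_iff_eq[of "col S n (j + 1) \<union> col S n (j + 3)"]
    by (metis One_nat_def finite_UnI insert_iff subsetI empty_iff equals0I)
  have X: "x \<in> col S n j \<union> col S n (j + 4)" if "x < 3" "x \<noteq> r" for x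
  proof -
    have "x \<notin> col S n (j + 1)" "x \<notin> col S n (j + 3)" using r that by auto
    from key2[OF that(1) e this] assms(2) show ?thesis by (auto split: if_splits)
  qed
  have sub: "{0, 1, 2} - {r} \<subseteq> col S n j \<union> col S n (j + 4)"
  proof
    fix x :: nat assume "x \<in> {0, 1, 2} - {r}"
    then have "x < 3" "x \<noteq> r" by auto
    then show "x \<in> col S n j \<union> col S n (j + 4)" using X by blast
  qed
  have "2 \<le> card ({0::nat, 1, 2} - {r})" by (auto simp: card_Diff_singleton_if)
  also have "\<dots> \<le> card (col S n j \<union> col S n (j + 4))" using sub col_fin by (intro card_mono) auto
  also have "\<dots> \<le> card (col S n j) + card (col S n (j + 4))" by (rule card_Un_le)
  finally show ?thesis .
qed

lemma card_S: "card S = (\<Sum>j<n. card (col S n j))"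
proof -
  have eq: "S = (\<lambda>(j, x). (x, j)) ` (SIGMA j:{..<n}. col S n j)"
  proof
    show "S \<subseteq> (\<lambda>(j, x). (x, j)) ` (SIGMA j:{..<n}. col S n j)"
    proof
      fix p assume p: "p \<in> S"
      obtain x j where pxj: "p = (x, j)" by (cases p)
      have "j < n" using p pxj SV by (auto simp: VV_iff)
      then have "(j, x) \<in> (SIGMA j:{..<n}. col S n j)" using p pxj by (simp add: col_def)
      then show "p \<in> (\<lambda>(j, x). (x, j)) ` (SIGMA j:{..<n}. col S n j)" using pxj by force
    qed
  next
    show "(\<lambda>(j, x). (x, j)) ` (SIGMA j:{..<n}. col S n j) \<subseteq> S"
      by (auto simp: col_def)
  qed
  have inj: "inj_on (\<lambda>(j, x). (x, j)) (SIGMA j:{..<n}. col S n j)"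
    by (auto simp: inj_on_def)
  have "card S = card (SIGMA j:{..<n}. col S n j)"
    by (subst eq) (rule card_image[OF inj])
  also have "\<dots> = (\<Sum>j<n. card (col S n j))"
    using col_fin by (intro card_SigmaI) auto
  finally show ?thesis .
qed

lemma lower: "n \<le> 2 * card S"
proof -
  define t where "t k = card (col S n k)" for k
  define W where "W k = psi (t k) (t (Suc k)) (t (Suc (Suc k))) (t (Suc (Suc (Suc k))))" for k
  have tper: "t (k + n) = t k" for k by (simp add: t_def col_def)
  have eqs: "j + 1 = Suc j" "j + 2 = Suc (Suc j)" "j + 3 = Suc (Suc (Suc j))" "j + 4 = Suc (Suc (Suc (Suc j)))" for j :: nat
    by simp_all
  have step: "W j + 1 \<le> 2 * t (Suc (Suc j)) + W (Suc j)" for j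
  proof -
    note r0 = R0[of j, unfolded eqs]
    note r1 = R1[of j, unfolded eqs]
    show ?thesis unfolding W_def t_def
      by (rule psi_step[OF col_le col_le col_le col_le col_le r0 r1])
  qed
  have "(\<Sum>j<n. W j + 1) \<le> (\<Sum>j<n. 2 * t (Suc (Suc j)) + W (Suc j))"
    by (intro sum_mono step)
  moreover have "(\<Sum>j<n. W j + 1) = (\<Sum>j<n. W j) + n"
    by (subst sum.distrib) simp
  moreover have "(\<Sum>j<n. 2 * t (Suc (Suc j)) + W (Suc j)) = 2 * (\<Sum>j<n. t (Suc (Suc j))) + (\<Sum>j<n. W (Suc j))"
    by (simp add: sum.distrib sum_distrib_left)
  ultimately have ineq: "(\<Sum>j<n. W j) + n \<le> 2 * (\<Sum>j<n. t (Suc (Suc j))) + (\<Sum>j<n. W (Suc j))"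
    by simp
  have t0: "t n = t 0" using tper[of 0] by simp
  have t1: "t (Suc n) = t (Suc 0)" using tper[of 1] by simp
  have t2: "t (Suc (Suc n)) = t (Suc (Suc 0))" using tper[of 2] by (simp add: numeral_2_eq_2)
  have t3: "t (Suc (Suc (Suc n))) = t (Suc (Suc (Suc 0)))" using tper[of 3] by (simp add: numeral_3_eq_3)
  have W0: "W n = W 0" unfolding W_def using t0 t1 t2 t3 by simp
  have sW: "(\<Sum>j<n. W (Suc j)) = (\<Sum>j<n. W j)" by (rule shift_sum[OF W0])
  have s1: "(\<Sum>j<n. t (Suc (Suc j))) = (\<Sum>j<n. t (Suc j))"
    using shift_sum[of "\<lambda>k. t (Suc k)" n] t1 by simp
  have s0: "(\<Sum>j<n. t (Suc j)) = (\<Sum>j<n. t j)"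
    using shift_sum[of t n] t0 by simp
  have "(\<Sum>j<n. t j) = card S" using card_S by (simp add: t_def)
  then show ?thesis using ineq sW s1 s0 by linarith
qed

end


lemma card_evens: "card {j. j < n \<and> even (j::nat)} = (n + 1) div 2"
proof (induction n)
  case 0 then show ?case by simp
next
  case (Suc n)
  show ?case
  proof (cases "even n")
    case True
    then have "{j. j < Suc n \<and> even j} = insert n {j. j < n \<and> even j}" by (auto simp: less_Suc_eq)
    then show ?thesis using Suc True by simp
  next
    case False
    then have "{j. j < Suc n \<and> even j} = {j. j < n \<and> even j}" by (auto simp: less_Suc_eq)
    then show ?thesis using Suc False by simp
  qed
qed

definition S0 :: "nat \<Rightarrow> (nat \<times> nat) set" where
  "S0 n = (\<lambda>j. (0, j)) ` {j. j < n \<and> even j}"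

lemma card_S0: "card (S0 n) = (n + 1) div 2"
  unfolding S0_def by (subst card_image) (auto simp: inj_on_def card_evens)

lemma cE3: "x < 3 \<Longrightarrow> x \<noteq> 0 \<Longrightarrow> cycle_E 3 x 0"
proof -
  assume "x < 3" "x \<noteq> 0"
  then have "x = 1 \<or> x = 2" by auto
  then show ?thesis by (auto simp: cycle_E_def)
qed

lemma S0_dom:
  assumes n: "n \<ge> 3"
  shows "disj_dom_set (VV n) (EE n) (S0 n)"
  unfolding disj_dom_set_def
proof (intro conjI ballI)
  show "S0 n \<subseteq> VV n" by (auto simp: S0_def VV_iff)
next
  fix v assume v: "v \<in> VV n - S0 n"
  obtain x j where vxj: "v = (x, j)" by (cases v)
  have x: "x < 3" and j: "j < n" using v vxj by (auto simp: VV_iff)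
  have fin1: "finite (nbhd (VV n) (EE n) v)" using finite_VV finite_subset[of _ "VV n"] by (auto simp: nbhd_def)
  have fin2: "finite (nbhd2 (VV n) (EE n) v)" using finite_VV finite_subset[of _ "VV n"] by (auto simp: nbhd2_def)
  have vV: "v \<in> VV n" using v by simp
  have sucj: "(j + 1) mod n < n" using n by simp
  have cj: "cycle_E n j ((j + 1) mod n)"
  proof -
    have "(j + 1) mod n \<noteq> j"
    proof (cases "j + 1 < n")
      case True then show ?thesis by simp
    next
      case False then have "j + 1 = n" using j by simp
      then show ?thesis using n by simp
    qed
    then show ?thesis using j sucj by (auto simp: cycle_E_def)
  qed
  show "card (nbhd (VV n) (EE n) v \<inter> S0 n) \<ge> 1 \<or> card (nbhd2 (VV n) (EE n) v \<inter> S0 n) \<ge> 2"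
  proof (cases "even j")
    case True
    then have x0: "x \<noteq> 0" using v vxj j by (auto simp: S0_def)
    have "(0, j) \<in> nbhd (VV n) (EE n) v"
      using x0 x j n by (intro in_nbhd) (auto simp: vxj VV_iff EE_iff cE3)
    moreover have "(0, j) \<in> S0 n" using True j by (auto simp: S0_def)
    ultimately have "nbhd (VV n) (EE n) v \<inter> S0 n \<noteq> {}" by blast
    then have "card (nbhd (VV n) (EE n) v \<inter> S0 n) \<ge> 1" using fin1
      by (simp add: Suc_le_eq card_gt_0_iff)
    then show ?thesis by simp
  next
    case False
    have ev1: "even ((j + 1) mod n)"
    proof (cases "j + 1 < n")
      case True then show ?thesis using False by simp
    next
      case False then have "j + 1 = n" using j by simp
      then show ?thesis by simp
    qed
    have u2S: "(0, (j + 1) mod n) \<in> S0 n" using ev1 sucj by (auto simp: S0_def)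
    show ?thesis
    proof (cases "x = 0")
      case True
      have "(0, (j + 1) mod n) \<in> nbhd (VV n) (EE n) v"
        using True cj x j sucj by (intro in_nbhd) (auto simp: vxj VV_iff EE_iff cycle_E_def)
      then have "nbhd (VV n) (EE n) v \<inter> S0 n \<noteq> {}" using u2S by blast
      then have "card (nbhd (VV n) (EE n) v \<inter> S0 n) \<ge> 1" using fin1
        by (simp add: Suc_le_eq card_gt_0_iff)
      then show ?thesis by simp
    next
      case x0: False
      have j1: "j \<ge> 1" using False by (cases j) auto
      have u1S: "(0, j - 1) \<in> S0 n" using False j1 j by (auto simp: S0_def)
      have cj1: "cycle_E n j (j - 1)" using j j1 by (auto simp: cycle_E_def)
      have w: "EE n v (0, j)" using x0 x by (auto simp: vxj EE_iff cE3)
      have wV: "(0, j) \<in> VV n" using j by (simp add: VV_iff)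
      have nE1: "\<not> EE n v (0, j - 1)" using x0 j1 by (auto simp: vxj EE_iff)
      have ne: "(j + 1) mod n \<noteq> j" using cj by (simp add: cycle_E_def)
      have nE2: "\<not> EE n v (0, (j + 1) mod n)" using x0 ne by (auto simp: vxj EE_iff)
      have in1: "(0, j - 1) \<in> nbhd2 (VV n) (EE n) v"
        using j x0 nE1 cj1 by (intro in_nbhd2[where V="VV n" and E="EE n" and v=v and w="(0, j)"] vV wV w) (auto simp: VV_iff EE_iff vxj)
      have in2: "(0, (j + 1) mod n) \<in> nbhd2 (VV n) (EE n) v"
        using sucj x0 nE2 cj by (intro in_nbhd2[where V="VV n" and E="EE n" and v=v and w="(0, j)"] vV wV w) (auto simp: VV_iff EE_iff vxj)
      have dist: "j - 1 \<noteq> (j + 1) mod n"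
      proof (cases "j + 1 < n")
        case True then show ?thesis by simp
      next
        case False then have "j + 1 = n" using j by simp
        then show ?thesis using n by simp
      qed
      have "{(0, j - 1), (0, (j + 1) mod n)} \<subseteq> nbhd2 (VV n) (EE n) v \<inter> S0 n"
        using in1 in2 u1S u2S by auto
      then have "card {(0::nat, j - 1), (0::nat, (j + 1) mod n)} \<le> card (nbhd2 (VV n) (EE n) v \<inter> S0 n)"
        using fin2 by (intro card_mono) auto
      then show ?thesis using dist by simp
    qed
  qed
qed

theorem theorem2:
  fixes n :: nat
  assumes "n \<ge> 3"
  shows "disj_dom_num (cart_V (cycle_V 3) (cycle_V n)) (cart_E (cycle_E 3) (cycle_E n))
           = (n + 1) div 2"
  unfolding disj_dom_num_def
proof (rule Least_equality)
  show "\<exists>S. disj_dom_set (VV n) (EE n) S \<and> card S = (n + 1) div 2"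
    using S0_dom[OF assms] card_S0 by blast
next
  fix k assume "\<exists>S. disj_dom_set (VV n) (EE n) S \<and> card S = k"
  then obtain S where "disj_dom_set (VV n) (EE n) S" "card S = k" by blast
  then have "n \<le> 2 * k" using lower[OF assms] by blast
  then show "(n + 1) div 2 \<le> k" by linarith
qed

end
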